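(* Let $k$ be a finite field of odd characteristic, let $A(t)\in k[t]$ be a square-free polynomial of odd degree $d>1$, and let $f(x)\in k[x]$ be a cubic polynomial such that $y^2=f(x)$ is an elliptic curve over $k$. Let $E_A$ be the elliptic curve over $k(t)$ defined by $A(t)y^2=f(x)$. Let $(F,G)$ be a separable integral point on $E_A$. Then $G$ divides $F'$ and $d/3\leq \deg F < d-1$.
   Context: A separable integral point on $E_A$ is a pair $(F,G)$ with $F,G\in k[t]$, $A(t)G(t)^2=f(F(t))$, and $F'\neq 0$, where $F'$ is the derivative of $F$ with respect to $t$. *)

theory Defs
  imports "HOL-Computational_Algebra.Computational_Algebra"
begin

text \<open>The affine curve y^2 = f(x) over k (char k odd) is an elliptic curve iff f is a cubic
  with nonzero discriminant, i.e. f has no repeated root over the algebraic closure,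
  i.e. f is coprime to its formal derivative.\<close>
definition elliptic_cubic :: "'k::field poly \<Rightarrow> bool" where
  "elliptic_cubic f \<longleftrightarrow> degree f = 3 \<and> coprime f (pderiv f)"

definition integral_point_EA :: "'k::field poly \<Rightarrow> 'k poly \<Rightarrow> 'k poly \<Rightarrow> 'k poly \<Rightarrow> bool" where
  "integral_point_EA A f F G \<longleftrightarrow> A * G^2 = pcompose f F"

definition separable_integral_point_EA :: "'k::field poly \<Rightarrow> 'k poly \<Rightarrow> 'k poly \<Rightarrow> 'k poly \<Rightarrow> bool" where
  "separable_integral_point_EA A f F G \<longleftrightarrow> integral_point_EA A f F G \<and> pderiv F \<noteq> 0"

end

theory Submission
  imports Defs
begin

lemma pderiv_degree_lt:
  fixes p :: "'a::{comm_semiring_1,semiring_no_zero_divisors} poly"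
  assumes "pderiv p \<noteq> 0"
  shows "degree (pderiv p) < degree p"
proof -
  let ?n = "degree (pderiv p)"
  have "coeff (pderiv p) ?n \<noteq> 0" using assms by simp
  hence "coeff p (Suc ?n) \<noteq> 0" by (simp add: coeff_pderiv)
  hence "Suc ?n \<le> degree p" by (rule le_degree)
  thus ?thesis by simp
qed

lemma coprime_bezout_ex:
  fixes a b :: "'a::euclidean_ring"
  shows "coprime a b \<Longrightarrow> \<exists>u v. u * a + v * b = 1"
proof (induction "euclidean_size b" arbitrary: a b rule: less_induct)
  case less
  show ?case
  proof (cases "b = 0")
    case True
    with less.prems have "a dvd 1" by simp
    then obtain k where "1 = a * k" by (rule dvdE)
    thus ?thesis by (metis add.right_neutral mult.commute mult_zero_left)
  next
    case False
    have "coprime b (a mod b)" using less.prems False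
      by (simp add: coprime_commute)
    moreover have "euclidean_size (a mod b) < euclidean_size b"
      using False by (rule mod_size_less)
    ultimately obtain u v where uv: "u * b + v * (a mod b) = 1"
      using less.hyps by blast
    have "a mod b = a - (a div b) * b" by (simp add: minus_div_mult_eq_mod)
    hence "u * b + v * (a - (a div b) * b) = 1" using uv by simp
    moreover have "v * a + (u - v * (a div b)) * b = u * b + v * (a - (a div b) * b)" by algebra
    ultimately have "v * a + (u - v * (a div b)) * b = 1" by simp
    thus ?thesis by blast
  qed
qed

lemma coprime_pcompose:
  fixes f g F :: "'k::field poly"
  assumes "coprime f g"
  shows "coprime (pcompose f F) (pcompose g F)"
proof -
  obtain u v where uv: "u * f + v * g = 1"
    using coprime_bezout_ex[OF assms] by blast
  have "pcompose (u * f + v * g) F = 1" using uv by (simp add: pcompose_1)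
  hence eq: "pcompose u F * pcompose f F + pcompose v F * pcompose g F = 1"
    by (simp add: pcompose_add pcompose_mult)
  show ?thesis
  proof (rule coprimeI)
    fix c assume "c dvd pcompose f F" "c dvd pcompose g F"
    hence "c dvd pcompose u F * pcompose f F + pcompose v F * pcompose g F" by simp
    thus "is_unit c" using eq by simp
  qed
qed

lemma coprime_dvd_mult_ex:
  fixes a b c :: "'a::euclidean_ring"
  assumes "coprime a b" "a dvd b * c"
  shows "a dvd c"
proof -
  obtain u v where uv: "u * a + v * b = 1" using coprime_bezout_ex[OF assms(1)] by blast
  have "c = (u * a + v * b) * c" using uv by simp
  also have "\<dots> = a * (u * c) + v * (b * c)" by (simp add: algebra_simps)
  finally have ceq: "c = a * (u * c) + v * (b * c)" .
  have "a dvd a * (u * c) + v * (b * c)" using assms(2) by simp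
  thus ?thesis using ceq by simp
qed

theorem lemma3p2:
  fixes A f F G :: "'k::{field,finite} poly"
  assumes "CHAR('k) \<noteq> 2"
    and "squarefree A" and "odd (degree A)" and "degree A > 1"
    and "elliptic_cubic f"
    and "separable_integral_point_EA A f F G"
  shows "G dvd pderiv F \<and> real (degree A) / 3 \<le> real (degree F) \<and> degree F < degree A - 1"
proof -
  have eq: "A * G^2 = pcompose f F" and dF: "pderiv F \<noteq> 0"
    using assms(6) unfolding separable_integral_point_EA_def integral_point_EA_def by auto
  have f3: "degree f = 3" and cop: "coprime f (pderiv f)"
    using assms(5) unfolding elliptic_cubic_def by auto
  have "pderiv (A * G^2) = pcompose (pderiv f) F * pderiv F"
    using eq by (simp add: pderiv_pcompose)
  moreover have "pderiv (A * G^2) = G * (pderiv A * G + 2 * A * pderiv G)"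
    by (simp only: pderiv_mult power2_eq_square) algebra
  ultimately have d1: "G dvd pcompose (pderiv f) F * pderiv F"
    by (metis dvd_triv_left)
  have Gf: "G dvd pcompose f F" using eq unfolding power2_eq_square by (metis dvd_triv_left dvd_mult mult.commute)
  have "coprime G (pcompose (pderiv f) F)"
    by (rule coprime_divisors[OF Gf dvd_refl coprime_pcompose[OF cop, of F]])
  hence Gd: "G dvd pderiv F" using d1 by (rule coprime_dvd_mult_ex)
  have G0: "G \<noteq> 0" using Gd dF by auto
  have A0: "A \<noteq> 0" using assms(4) by auto
  have "degree (A * G^2) = degree A + 2 * degree G"
    using A0 G0 by (simp add: degree_mult_eq degree_power_eq)
  moreover have "degree (pcompose f F) = 3 * degree F" by (simp add: degree_pcompose f3)
  ultimately have deq: "degree A + 2 * degree G = 3 * degree F" using eq by simp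
  have "degree G \<le> degree (pderiv F)" using Gd dF by (rule dvd_imp_degree_le)
  also have "\<dots> < degree F" using dF by (rule pderiv_degree_lt)
  finally have "degree G < degree F" .
  hence "degree F < degree A - 1" using deq by linarith
  moreover have "real (degree A) / 3 \<le> real (degree F)"
  proof -
    have "real (degree A) \<le> 3 * real (degree F)" using deq by linarith
    thus ?thesis by simp
  qed
  ultimately show ?thesis using Gd by simp
qed

end
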